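(* Let $k\geq 2$ and $n\geq k$ be integers. Then in $\mathcal{H}$, $$ z_1\,\tilde{\sqcup}\, \sum_{\substack{s_i\geq 1,\ s_1\geq 2\\ s_1+\cdots+s_{k-1}=n-1}}z_{s_1, \dots, s_{k-1}} = \sum_{\substack{t_i\geq 1,\ t_1=1,\ t_2\geq 2\\ t_1+\cdots+t_{k}=n}}z_{t_1,\dots, t_{k}}+ k \sum_{\substack{ t_i\geq 1,\ t_1\geq 2,\ t_k=1 \\ t_1+\cdots+t_{k}=n}} z_{t_1,\dots, t_{k}} + (k-1) \sum_{\substack{ t_i\geq 1,\ t_1, t_k\geq 2 \\ t_1+\cdots+t_{k}=n}} z_{t_1,\dots, t_{k}} $$ and $$ z_1\,\tilde{\sqcup} \sum_{\substack{ s_i\geq 1\\ s_1+\cdots+s_{k-1}=n-1}} z_{s_1, \dots, s_{k-1}}= k \sum_{\substack{ t_i\geq 1,\ t_k=1\\ t_1+\cdots+t_{k}=n}}z_{t_1,\dots, t_{k}} + (k-1) \sum_{\substack{ t_i\geq 1,\ t_k\geq 2 \\ t_1+\cdots+t_{k}=n }} z_{t_1,\dots, t_{k}}. $$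
   Context: Let $\mathcal{H}$ be the free $\mathbb{Z}$-module on words in letters $z_s$ ($s\geq1$), with $z_{s_1,\dots,s_k}:=z_{s_1}\cdots z_{s_k}$ and $1$ the empty word. Let $\mathbb{Z}\langle x_0,x_1\rangle$ be the free $\mathbb{Z}$-module on words in two letters $x_0,x_1$, with the shuffle product $\sqcup$ defined bilinearly and recursively by $1\sqcup u=u\sqcup 1=u$ and $(au)\sqcup(bv)=a(u\sqcup (bv))+b((au)\sqcup v)$ for letters $a,b\in\{x_0,x_1\}$ and words $u,v$. Let $\rho$ be the $\mathbb{Z}$-linear bijection from $\mathbb{Z}\oplus \mathbb{Z}\langle x_0,x_1\rangle x_1$ (span of $1$ and words ending in $x_1$) onto $\mathcal{H}$ given by $\rho(1)=1$ and $\rho(x_0^{s_1-1}x_1\cdots x_0^{s_k-1}x_1)=z_{s_1,\dots,s_k}$. Define the product $\tilde{\sqcup}$ on $\mathcal{H}$ by $w_1\,\tilde{\sqcup}\,w_2=\rho\big(\rho^{-1}(w_1)\sqcup\rho^{-1}(w_2)\big)$. Empty sums are zero. *)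

theory Defs
  imports Main
begin

text \<open>Elements of Z<x0,x1>: finitely supported functions bool list => int,
  where False encodes x0 and True encodes x1.
  Elements of H: finitely supported functions nat list => int, supported on
  words with all letters >= 1 (the word z_{s1..sk} is the list [s1,..,sk]).\<close>

type_synonym xword = "bool list"
type_synonym zelem = "nat list \<Rightarrow> int"
type_synonym xelem = "xword \<Rightarrow> int"

fun shw :: "xword \<Rightarrow> xword \<Rightarrow> xelem" where
  "shw [] v = (\<lambda>w. if w = v then 1 else 0)"
| "shw (a # u) [] = (\<lambda>w. if w = a # u then 1 else 0)"
| "shw (a # u) (b # v) = (\<lambda>w. case w of [] \<Rightarrow> 0
      | c # w' \<Rightarrow> (if c = a then shw u (b # v) w' else 0)
                 + (if c = b then shw (a # u) v w' else 0))"

definition shuffle :: "xelem \<Rightarrow> xelem \<Rightarrow> xelem" where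
  "shuffle f g = (\<lambda>w. \<Sum>u\<in>{u. f u \<noteq> 0}. \<Sum>v\<in>{v. g v \<noteq> 0}. f u * g v * shw u v w)"

definition enc :: "nat list \<Rightarrow> xword" where
  "enc s = concat (map (\<lambda>si. replicate (si - 1) False @ [True]) s)"

definition rho :: "xelem \<Rightarrow> zelem" where
  "rho F = (\<lambda>s. if (\<forall>x\<in>set s. 1 \<le> x) then F (enc s) else 0)"

definition rho_inv :: "zelem \<Rightarrow> xelem" where
  "rho_inv h = (\<lambda>u. \<Sum>s\<in>{s. h s \<noteq> 0}. if enc s = u then h s else 0)"

definition tshuffle :: "zelem \<Rightarrow> zelem \<Rightarrow> zelem" where
  "tshuffle h1 h2 = rho (shuffle (rho_inv h1) (rho_inv h2))"

definition zw :: "nat list \<Rightarrow> zelem" where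
  "zw s = (\<lambda>t. if t = s then 1 else 0)"

definition hadd :: "zelem \<Rightarrow> zelem \<Rightarrow> zelem" where
  "hadd f g = (\<lambda>t. f t + g t)"

definition hscale :: "int \<Rightarrow> zelem \<Rightarrow> zelem" where
  "hscale c f = (\<lambda>t. c * f t)"

definition hsum :: "nat list set \<Rightarrow> zelem" where
  "hsum S = (\<lambda>t. \<Sum>s\<in>S. zw s t)"

end

theory Submission imports Defs begin

definition del :: "nat \<Rightarrow> 'a list \<Rightarrow> 'a list" where
  "del i w = take i w @ drop (Suc i) w"

lemma del_Suc[simp]: "del (Suc i) (c#w) = c # del i w"
  by (simp add: del_def)
lemma del_0[simp]: "del 0 (c#w) = w"
  by (simp add: del_def)

lemma shw_single: "shw [a] v w = (\<Sum>i<length w. of_bool (w!i = a \<and> del i w = v))"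
proof (induction v arbitrary: w)
  case Nil
  show ?case
  proof (cases w)
    case Nil then show ?thesis by simp
  next
    case (Cons c w')
    have h: "(\<Sum>i<length w. of_bool (w!i = a \<and> del i w = [])) =
      of_bool (c = a \<and> w' = []) + (\<Sum>i<length w'. of_bool (w'!i = a \<and> c # del i w' = []))"
      unfolding Cons by (simp only: length_Cons sum.lessThan_Suc_shift) simp
    show ?thesis unfolding h by (simp add: Cons)
  qed
next
  case (Cons b v)
  show ?case
  proof (cases w)
    case Nil then show ?thesis by simp
  next
    case (Cons c w')
    have "(\<Sum>i<length w'. of_bool (w'!i = a \<and> c # del i w' = b # v)) =
          (if c = b then shw [a] v w' else 0)"
      by (cases "c = b") (simp_all add: Cons.IH)
    moreover have h: "(\<Sum>i<length w. of_bool (w!i = a \<and> del i w = b#v)) =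
      of_bool (c = a \<and> w' = b#v) + (\<Sum>i<length w'. of_bool (w'!i = a \<and> c # del i w' = b#v))"
      unfolding Cons by (simp only: length_Cons sum.lessThan_Suc_shift) simp
    ultimately show ?thesis unfolding h by (simp add: Cons)
  qed
qed

definition Nw :: "(bool list \<Rightarrow> bool) \<Rightarrow> bool list \<Rightarrow> int" where
  "Nw P w = (\<Sum>i<length w. of_bool (w!i \<and> P (del i w)))"

lemma Nw_Nil[simp]: "Nw P [] = 0" by (simp add: Nw_def)

lemma Nw_Cons: "Nw P (c#w) = of_bool (c \<and> P w) + Nw (\<lambda>x. P (c#x)) w"
  unfolding Nw_def by (simp only: length_Cons sum.lessThan_Suc_shift) simp

lemma Nw_rep: "Nw P (replicate m False @ w) = Nw (\<lambda>x. P (replicate m False @ x)) w"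
  by (induction m arbitrary: P) (simp_all add: Nw_Cons)

definition merge :: "nat \<Rightarrow> nat list \<Rightarrow> nat list" where
  "merge j t = take j t @ (t!j + t!(Suc j) - 1) # drop (Suc (Suc j)) t"

lemma merge_Suc[simp]: "merge (Suc j) (a#t) = a # merge j t"
  by (simp add: merge_def)
lemma merge_0[simp]: "merge 0 (a#b#t) = (a+b-1) # t"
  by (simp add: merge_def)

lemma enc_Nil[simp]: "enc [] = []" by (simp add: enc_def)
lemma enc_Cons[simp]: "enc (a#t) = replicate (a-1) False @ True # enc t" by (simp add: enc_def)

definition pos :: "nat list \<Rightarrow> bool" where "pos t = (\<forall>x\<in>set t. 1 \<le> x)"

lemma Nw_enc:
  assumes "pos t"
  shows "Nw P (enc t) = (\<Sum>j<length t - 1. of_bool (P (enc (merge j t))))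
     + of_bool (t \<noteq> [] \<and> P (enc (butlast t) @ replicate (last t - 1) False))"
  using assms
proof (induction t arbitrary: P)
  case Nil then show ?case by simp
next
  case (Cons a t')
  have pa: "1 \<le> a" and pt: "pos t'" using Cons.prems by (auto simp: pos_def)
  have e: "replicate (a-1) False @ True # enc y = enc (a#y)" for y by simp
  have "Nw P (enc (a#t')) = of_bool (P (replicate (a-1) False @ enc t'))
      + Nw (\<lambda>x. P (replicate (a-1) False @ True # x)) (enc t')"
    by (simp add: Nw_rep Nw_Cons)
  also have "Nw (\<lambda>x. P (replicate (a-1) False @ True # x)) (enc t') =
      (\<Sum>j<length t' - 1. of_bool (P (enc (a # merge j t'))))
     + of_bool (t' \<noteq> [] \<and> P (enc (a # butlast t') @ replicate (last t' - 1) False))"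
    using Cons.IH[OF pt] by simp
  finally have h: "Nw P (enc (a#t')) = of_bool (P (replicate (a-1) False @ enc t')) +
      ((\<Sum>j<length t' - 1. of_bool (P (enc (a # merge j t'))))
     + of_bool (t' \<noteq> [] \<and> P (enc (a # butlast t') @ replicate (last t' - 1) False)))" .
  show ?case
  proof (cases t')
    case Nil then show ?thesis using h by simp
  next
    case (Cons b t'')
    have pb: "1 \<le> b" using pt Cons by (simp add: pos_def)
    have r: "replicate (a-1) False @ enc t' = enc (merge 0 (a#t'))"
      using pa pb Cons by (simp add: replicate_add[symmetric] numeral_2_eq_2)
    have s: "(\<Sum>j<length (a#t') - 1. of_bool (P (enc (merge j (a#t'))))) =
       of_bool (P (enc (merge 0 (a#t')))) + (\<Sum>j<length t' - 1. of_bool (P (enc (a # merge j t'))))"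
      using Cons by (simp only: length_Cons diff_Suc_1 sum.lessThan_Suc_shift) simp
    show ?thesis unfolding s h r using Cons by simp
  qed
qed


lemma rep_True_inj: "replicate m False @ True # X = replicate m' False @ True # Y \<Longrightarrow> m = m' \<and> X = Y"
proof (induction m arbitrary: m')
  case 0 then show ?case by (cases m') auto
next
  case (Suc m) then show ?case by (cases m') auto
qed

lemma enc_inj: "pos s \<Longrightarrow> pos s' \<Longrightarrow> enc s = enc s' \<Longrightarrow> s = s'"
proof (induction s arbitrary: s')
  case Nil then show ?case by (cases s') auto
next
  case (Cons a s)
  show ?case
  proof (cases s')
    case Nil then show ?thesis using Cons.prems by simp
  next
    case (Cons b s2)
    have "replicate (a-1) False @ True # enc s = replicate (b-1) False @ True # enc s2"
      using Cons.prems(3) Cons by simp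
    then have ab: "a - 1 = b - 1" and es: "enc s = enc s2" using rep_True_inj by blast+
    have "1 \<le> a" "1 \<le> b" "pos s" "pos s2" using Cons Cons.prems by (auto simp: pos_def)
    with ab es Cons.IH have "a = b" "s = s2" by auto
    then show ?thesis using Cons by simp
  qed
qed

lemma enc_last: "enc s = [] \<or> last (enc s) = True"
  by (induction s) auto

lemma enc_mem: "pos x \<Longrightarrow> \<forall>s\<in>S. pos s \<Longrightarrow> (enc x \<in> enc ` S) = (x \<in> S)"
proof
  assume a: "pos x" "\<forall>s\<in>S. pos s" "enc x \<in> enc ` S"
  then obtain s where "s \<in> S" "enc x = enc s" by auto
  then show "x \<in> S" using enc_inj[of x s] a by auto
qed auto

lemma pos_merge: "pos t \<Longrightarrow> Suc j < length t \<Longrightarrow> pos (merge j t)"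
proof -
  assume p: "pos t" and j: "Suc j < length t"
  have "1 \<le> t!(Suc j)" using p j by (simp add: pos_def)
  moreover have "1 \<le> t!j" using p j by (simp add: pos_def)
  ultimately have "1 \<le> t!j + t!(Suc j) - 1" by simp
  then show ?thesis using p unfolding pos_def merge_def by (auto dest: in_set_takeD in_set_dropD)
qed

lemma pos_butlast: "pos t \<Longrightarrow> pos (butlast t)"
  unfolding pos_def by (auto dest: in_set_butlastD)

lemma sum_ofbool_eq: "finite A \<Longrightarrow> (\<Sum>v\<in>A. of_bool (c \<and> x = v)) = (of_bool (c \<and> x \<in> A) :: int)"
  by (cases c) (simp_all add: of_bool_def)

lemma tsh_generic:
  assumes fin: "finite S" and posS: "\<forall>s\<in>S. pos s"
  shows "tshuffle (zw [1]) (hsum S) t = (if pos t then (\<Sum>j<length t - 1. of_bool (merge j t \<in> S))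
          + of_bool (t \<noteq> [] \<and> last t = 1 \<and> butlast t \<in> S) else 0)"
proof -
  have h1: "rho_inv (zw [1]) = (\<lambda>u. of_bool (u = [True]))"
  proof -
    have e: "{s. zw [1] s \<noteq> 0} = {[1]}" unfolding zw_def by simp
    have z: "zw [1] [1] = 1" unfolding zw_def by simp
    show ?thesis unfolding rho_inv_def e by (rule ext) (auto simp: zw_def)
  qed
  have h2: "hsum S = (\<lambda>t. of_bool (t \<in> S))"
    unfolding hsum_def zw_def using fin by (auto simp: of_bool_def)
  have h3: "rho_inv (hsum S) = (\<lambda>u. of_bool (u \<in> enc ` S))"
  proof
    fix u
    have e: "{s. hsum S s \<noteq> 0} = S" by (auto simp: h2)
    show "rho_inv (hsum S) u = of_bool (u \<in> enc ` S)"
    proof (cases "u \<in> enc ` S")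
      case True
      then obtain s0 where s0: "s0 \<in> S" "u = enc s0" by auto
      have "rho_inv (hsum S) u = (\<Sum>s\<in>S. if s = s0 then 1 else 0)"
        unfolding rho_inv_def e
      proof (rule sum.cong)
        fix s assume sS: "s \<in> S"
        have "(enc s = u) = (s = s0)" using enc_inj[of s s0] sS s0 posS by auto
        then show "(if enc s = u then hsum S s else 0) = (if s = s0 then 1 else 0)"
          using sS by (auto simp: h2)
      qed simp
      also have "\<dots> = 1" using s0 fin by simp
      finally show ?thesis using True by simp
    next
      case False
      then show ?thesis unfolding rho_inv_def e by (auto simp: h2 intro!: sum.neutral)
    qed
  qed
  have h4: "shuffle (rho_inv (zw [1])) (rho_inv (hsum S)) w = Nw (\<lambda>x. x \<in> enc ` S) w" for w
  proof -
    have a: "{u. of_bool (u = [True]) \<noteq> (0::int)} = {[True]}" by auto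
    have b: "{v. of_bool (v \<in> enc ` S) \<noteq> (0::int)} = enc ` S" by auto
    have "shuffle (rho_inv (zw [1])) (rho_inv (hsum S)) w = (\<Sum>v\<in>enc ` S. shw [True] v w)"
      unfolding shuffle_def h1 h3 a b by (simp cong: sum.cong)
    also have "\<dots> = (\<Sum>v\<in>enc ` S. \<Sum>i<length w. of_bool (w!i = True \<and> del i w = v))"
      by (simp only: shw_single)
    also have "\<dots> = (\<Sum>i<length w. \<Sum>v\<in>enc ` S. of_bool (w!i \<and> del i w = v))"
      by (subst sum.swap) simp
    also have "\<dots> = Nw (\<lambda>x. x \<in> enc ` S) w"
      unfolding Nw_def by (rule sum.cong[OF refl], rule sum_ofbool_eq[OF finite_imageI[OF fin]])
    finally show ?thesis .
  qed
  show ?thesis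
  proof (cases "pos t")
    case False then show ?thesis unfolding tshuffle_def rho_def pos_def by auto
  next
    case True
    have "tshuffle (zw [1]) (hsum S) t = Nw (\<lambda>x. x \<in> enc ` S) (enc t)"
      using True unfolding tshuffle_def rho_def h4 pos_def by simp
    also have "\<dots> = (\<Sum>j<length t - 1. of_bool (enc (merge j t) \<in> enc ` S))
     + of_bool (t \<noteq> [] \<and> enc (butlast t) @ replicate (last t - 1) False \<in> enc ` S)"
      by (rule Nw_enc[OF True])
    also have "(\<Sum>j<length t - 1. of_bool (enc (merge j t) \<in> enc ` S)) =
        (\<Sum>j<length t - 1. of_bool (merge j t \<in> S))"
      by (rule sum.cong) (use True posS in \<open>auto simp: enc_mem pos_merge\<close>)
    also have "(t \<noteq> [] \<and> enc (butlast t) @ replicate (last t - 1) False \<in> enc ` S) =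
        (t \<noteq> [] \<and> last t = 1 \<and> butlast t \<in> S)"
    proof (cases "t \<noteq> [] \<and> last t = 1")
      case True2: True
      then show ?thesis using enc_mem[OF pos_butlast[OF True] posS] by simp
    next
      case False2: False
      show ?thesis
      proof (cases "t = []")
        case False
        then have "1 \<le> last t" using True unfolding pos_def by simp
        then have l2: "last t \<ge> 2" using False2 False by simp
        have "\<forall>s. enc s \<noteq> enc (butlast t) @ replicate (last t - 1) False"
        proof (intro allI notI)
          fix s assume es: "enc s = enc (butlast t) @ replicate (last t - 1) False"
          have ne: "replicate (last t - 1) False \<noteq> []" using l2 by simp
          then have "last (enc s) = False" unfolding es using l2 by simp
          moreover have "enc s \<noteq> []" unfolding es using ne by simp
          ultimately show False using enc_last[of s] by simp
        qed
        then show ?thesis using False2 by auto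
      qed simp
    qed
    finally show ?thesis using True by simp
  qed
qed


lemma merge_props:
  "pos t \<Longrightarrow> Suc j < length t \<Longrightarrow> length (merge j t) = length t - 1
     \<and> sum_list (merge j t) + 1 = sum_list t
     \<and> merge j t ! 0 = (if j = 0 then t!0 + t!1 - 1 else t!0)"
proof (induction t arbitrary: j)
  case Nil then show ?case by simp
next
  case (Cons a t')
  then have pa: "1 \<le> a" and pt: "pos t'" by (auto simp: pos_def)
  show ?case
  proof (cases j)
    case 0
    then obtain b t'' where t': "t' = b # t''" using Cons.prems by (cases t') auto
    have "1 \<le> b" using pt t' by (simp add: pos_def)
    then show ?thesis using 0 t' pa by simp
  next
    case (Suc j')
    have "Suc j' < length t'" using Cons.prems Suc by simp
    with Cons.IH[OF pt this] show ?thesis using Suc by auto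
  qed
qed

lemma fin_lists: "finite {s::nat list. length s = m \<and> P s \<and> sum_list s = N}"
proof (rule finite_subset)
  show "{s::nat list. length s = m \<and> P s \<and> sum_list s = N} \<subseteq> {s. set s \<subseteq> {..N} \<and> length s = m}"
    by (auto dest: member_le_sum_list)
  show "finite {s::nat list. set s \<subseteq> {..N} \<and> length s = m}"
    by (rule finite_lists_length_eq) simp
qed

lemma hsum_ofbool: "finite T \<Longrightarrow> hsum T t = of_bool (t \<in> T)"
  unfolding hsum_def zw_def by (auto simp: of_bool_def)

lemma sum_if0: "(\<Sum>j<Suc m. of_bool (2 \<le> (if j = 0 then A else B))) = (of_bool (2 \<le> (A::nat)) + int m * of_bool (2 \<le> (B::nat)) :: int)"
  by (simp only: sum.lessThan_Suc_shift) simp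

theorem lemma4p2:
  fixes k n :: nat
  assumes "2 \<le> k" and "k \<le> n"
  shows "tshuffle (zw [1])
           (hsum {s. length s = k - 1 \<and> (\<forall>x\<in>set s. 1 \<le> x) \<and> 2 \<le> s ! 0
                     \<and> sum_list s = n - 1})
         = hadd (hsum {t. length t = k \<and> (\<forall>x\<in>set t. 1 \<le> x) \<and> t ! 0 = 1 \<and> 2 \<le> t ! 1
                        \<and> sum_list t = n})
           (hadd (hscale (int k) (hsum {t. length t = k \<and> (\<forall>x\<in>set t. 1 \<le> x) \<and> 2 \<le> t ! 0
                        \<and> t ! (k - 1) = 1 \<and> sum_list t = n}))
                 (hscale (int k - 1) (hsum {t. length t = k \<and> (\<forall>x\<in>set t. 1 \<le> x) \<and> 2 \<le> t ! 0
                        \<and> 2 \<le> t ! (k - 1) \<and> sum_list t = n})))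
       \<and> tshuffle (zw [1])
           (hsum {s. length s = k - 1 \<and> (\<forall>x\<in>set s. 1 \<le> x) \<and> sum_list s = n - 1})
         = hadd (hscale (int k) (hsum {t. length t = k \<and> (\<forall>x\<in>set t. 1 \<le> x)
                        \<and> t ! (k - 1) = 1 \<and> sum_list t = n}))
                (hscale (int k - 1) (hsum {t. length t = k \<and> (\<forall>x\<in>set t. 1 \<le> x)
                        \<and> 2 \<le> t ! (k - 1) \<and> sum_list t = n}))"
proof -
  define S1 where "S1 = {s. length s = k - 1 \<and> (\<forall>x\<in>set s. 1 \<le> x) \<and> 2 \<le> s ! 0
                     \<and> sum_list s = n - 1}"
  define S2 where "S2 = {s. length s = k - 1 \<and> (\<forall>x\<in>set s. 1 \<le> x) \<and> sum_list s = n - 1}"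
  have f1: "finite S1" unfolding S1_def using fin_lists[of "k-1" "\<lambda>s. (\<forall>x\<in>set s. 1 \<le> x) \<and> 2 \<le> s ! 0" "n-1"]
    by (simp add: conj_assoc)
  have f2: "finite S2" unfolding S2_def using fin_lists[of "k-1" "\<lambda>s. (\<forall>x\<in>set s. 1 \<le> x)" "n-1"]
    by (simp add: conj_assoc)
  have p1: "\<forall>s\<in>S1. pos s" and p2: "\<forall>s\<in>S2. pos s" unfolding S1_def S2_def pos_def by auto
  have fT: "finite {t. length t = k \<and> P t \<and> sum_list t = n}" for P using fin_lists .
  have hs: "hsum {t. length t = k \<and> P t \<and> sum_list t = n} t = of_bool (length t = k \<and> P t \<and> sum_list t = n)" for P t
    using hsum_ofbool[OF fT[of P]] by simp
  have hs1: "hsum {t. length t = k \<and> (\<forall>x\<in>set t. 1 \<le> x) \<and> t ! 0 = 1 \<and> 2 \<le> t ! 1 \<and> sum_list t = n} t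
     = of_bool (length t = k \<and> ((\<forall>x\<in>set t. 1 \<le> x) \<and> t ! 0 = 1 \<and> 2 \<le> t ! 1) \<and> sum_list t = n)" for t
    using hs[of "\<lambda>t. (\<forall>x\<in>set t. 1 \<le> x) \<and> t ! 0 = 1 \<and> 2 \<le> t ! 1" t] by (simp add: conj_assoc)
  have hs2: "hsum {t. length t = k \<and> (\<forall>x\<in>set t. 1 \<le> x) \<and> 2 \<le> t ! 0 \<and> t ! (k - 1) = 1 \<and> sum_list t = n} t
     = of_bool (length t = k \<and> ((\<forall>x\<in>set t. 1 \<le> x) \<and> 2 \<le> t ! 0 \<and> t ! (k - 1) = 1) \<and> sum_list t = n)" for t
    using hs[of "\<lambda>t. (\<forall>x\<in>set t. 1 \<le> x) \<and> 2 \<le> t ! 0 \<and> t ! (k - 1) = 1" t] by (simp add: conj_assoc)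
  have hs3: "hsum {t. length t = k \<and> (\<forall>x\<in>set t. 1 \<le> x) \<and> 2 \<le> t ! 0 \<and> 2 \<le> t ! (k - 1) \<and> sum_list t = n} t
     = of_bool (length t = k \<and> ((\<forall>x\<in>set t. 1 \<le> x) \<and> 2 \<le> t ! 0 \<and> 2 \<le> t ! (k - 1)) \<and> sum_list t = n)" for t
    using hs[of "\<lambda>t. (\<forall>x\<in>set t. 1 \<le> x) \<and> 2 \<le> t ! 0 \<and> 2 \<le> t ! (k - 1)" t] by (simp add: conj_assoc)
  have hs4: "hsum {t. length t = k \<and> (\<forall>x\<in>set t. 1 \<le> x) \<and> t ! (k - 1) = 1 \<and> sum_list t = n} t
     = of_bool (length t = k \<and> ((\<forall>x\<in>set t. 1 \<le> x) \<and> t ! (k - 1) = 1) \<and> sum_list t = n)" for t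
    using hs[of "\<lambda>t. (\<forall>x\<in>set t. 1 \<le> x) \<and> t ! (k - 1) = 1" t] by (simp add: conj_assoc)
  have hs5: "hsum {t. length t = k \<and> (\<forall>x\<in>set t. 1 \<le> x) \<and> 2 \<le> t ! (k - 1) \<and> sum_list t = n} t
     = of_bool (length t = k \<and> ((\<forall>x\<in>set t. 1 \<le> x) \<and> 2 \<le> t ! (k - 1)) \<and> sum_list t = n)" for t
    using hs[of "\<lambda>t. (\<forall>x\<in>set t. 1 \<le> x) \<and> 2 \<le> t ! (k - 1)" t] by (simp add: conj_assoc)
  have main: "tshuffle (zw [1]) (hsum S1) t = hadd (hsum {t. length t = k \<and> (\<forall>x\<in>set t. 1 \<le> x) \<and> t ! 0 = 1 \<and> 2 \<le> t ! 1
                        \<and> sum_list t = n})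
           (hadd (hscale (int k) (hsum {t. length t = k \<and> (\<forall>x\<in>set t. 1 \<le> x) \<and> 2 \<le> t ! 0
                        \<and> t ! (k - 1) = 1 \<and> sum_list t = n}))
                 (hscale (int k - 1) (hsum {t. length t = k \<and> (\<forall>x\<in>set t. 1 \<le> x) \<and> 2 \<le> t ! 0
                        \<and> 2 \<le> t ! (k - 1) \<and> sum_list t = n}))) t
     \<and> tshuffle (zw [1]) (hsum S2) t = hadd (hscale (int k) (hsum {t. length t = k \<and> (\<forall>x\<in>set t. 1 \<le> x)
                        \<and> t ! (k - 1) = 1 \<and> sum_list t = n}))
                (hscale (int k - 1) (hsum {t. length t = k \<and> (\<forall>x\<in>set t. 1 \<le> x)
                        \<and> 2 \<le> t ! (k - 1) \<and> sum_list t = n})) t" for t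
  proof (cases "pos t")
    case False
    then have np: "\<not> (\<forall>x\<in>set t. 1 \<le> x)" by (simp add: pos_def)
    show ?thesis unfolding tsh_generic[OF f1 p1] tsh_generic[OF f2 p2] hadd_def hscale_def
        hs1 hs2 hs3 hs4 hs5 using False np by auto
  next
    case True
    then have pt: "\<forall>x\<in>set t. 1 \<le> x" by (simp add: pos_def)
    define L where "L = (length t = k \<and> sum_list t = n)"
    have slen: "length t \<le> sum_list t"
      using pt by (induction t) auto
    have m2: "merge j t \<in> S2 \<longleftrightarrow> L" if j: "j < length t - 1" for j
    proof -
      have mp: "pos (merge j t)" using pos_merge[OF True] j by simp
      have "length (merge j t) = length t - 1 \<and> sum_list (merge j t) + 1 = sum_list t"
        using merge_props[OF True] j by simp
      then show ?thesis using mp j slen assms unfolding S2_def L_def pos_def by auto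
    qed
    have m1: "merge j t \<in> S1 \<longleftrightarrow> L \<and> 2 \<le> (if j = 0 then t!0 + t!1 - 1 else t!0)" if j: "j < length t - 1" for j
    proof -
      have "merge j t \<in> S1 \<longleftrightarrow> merge j t \<in> S2 \<and> 2 \<le> merge j t ! 0"
        unfolding S1_def S2_def by auto
      then show ?thesis using m2[OF j] merge_props[OF True, of j] j by simp
    qed
    have b2: "(t \<noteq> [] \<and> last t = 1 \<and> butlast t \<in> S2) \<longleftrightarrow> L \<and> t!(k-1) = 1"
    proof (cases "t = []")
      case True then show ?thesis using assms unfolding L_def by auto
    next
      case False
      have "sum_list t = sum_list (butlast t @ [last t])" using append_butlast_last_id[OF False] by simp
      then have e: "sum_list (butlast t) + last t = sum_list t" by simp
      have l: "last t = t ! (length t - 1)" using False by (simp add: last_conv_nth)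
      have pb: "\<forall>x\<in>set (butlast t). 1 \<le> x" using pos_butlast[OF True] by (simp add: pos_def)
      have lb: "length (butlast t) = length t - 1" by simp
      show ?thesis
      proof
        assume h: "t \<noteq> [] \<and> last t = 1 \<and> butlast t \<in> S2"
        then have "length t - 1 = k - 1" "sum_list (butlast t) = n - 1" unfolding S2_def by auto
        then have "length t = k" "sum_list t = n" using False assms h e by (cases t; simp)+
        then show "L \<and> t!(k-1) = 1" unfolding L_def using h l by simp
      next
        assume h: "L \<and> t!(k-1) = 1"
        then have "length t = k" "sum_list t = n" unfolding L_def by auto
        then have "last t = 1" using h l by simp
        moreover have "sum_list (butlast t) = n - 1" using e \<open>sum_list t = n\<close> \<open>last t = 1\<close> by simp
        ultimately show "t \<noteq> [] \<and> last t = 1 \<and> butlast t \<in> S2"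
          unfolding S2_def using False pb lb \<open>length t = k\<close> by simp
      qed
    qed
    have b1: "(t \<noteq> [] \<and> last t = 1 \<and> butlast t \<in> S1) \<longleftrightarrow> L \<and> t!(k-1) = 1 \<and> 2 \<le> t!0"
    proof -
      have "(t \<noteq> [] \<and> last t = 1 \<and> butlast t \<in> S1) \<longleftrightarrow>
            (t \<noteq> [] \<and> last t = 1 \<and> butlast t \<in> S2) \<and> 2 \<le> butlast t ! 0"
        unfolding S1_def S2_def by auto
      moreover have "L \<Longrightarrow> butlast t ! 0 = t ! 0" unfolding L_def using assms by (simp add: nth_butlast)
      ultimately show ?thesis using b2 by auto
    qed
    have sum2: "(\<Sum>j<length t - 1. of_bool (merge j t \<in> S2)) = (if L then int k - 1 else 0)"
    proof (cases L)
      case True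
      then have lt: "length t - 1 = k - 1" unfolding L_def by simp
      have "(\<Sum>j<length t - 1. of_bool (merge j t \<in> S2)) = (\<Sum>j<length t - 1. (1::int))"
        by (rule sum.cong) (use m2 True in auto)
      then show ?thesis using True lt assms by simp
    next
      case False
      have "(\<Sum>j<length t - 1. of_bool (merge j t \<in> S2)) = (\<Sum>j<length t - 1. (0::int))"
        by (rule sum.cong) (use m2 False in auto)
      then show ?thesis using False by simp
    qed
    have sum1: "(\<Sum>j<length t - 1. of_bool (merge j t \<in> S1)) =
        (if L then of_bool (2 \<le> t!0 + t!1 - 1) + int (k - 2) * of_bool (2 \<le> t!0) else 0)"
    proof (cases L)
      case True
      have "(\<Sum>j<length t - 1. of_bool (merge j t \<in> S1)) =
            (\<Sum>j<Suc (k - 2). of_bool (2 \<le> (if j = 0 then t!0 + t!1 - 1 else t!0)))"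
      proof -
        have lt: "length t - 1 = Suc (k - 2)" using True assms unfolding L_def by simp
        show ?thesis unfolding lt by (rule sum.cong) (use m1 True lt in auto)
      qed
      also have "\<dots> = of_bool (2 \<le> t!0 + t!1 - 1) + int (k - 2) * of_bool (2 \<le> t!0)"
        by (rule sum_if0)
      finally show ?thesis by (simp only: if_P[OF True])
    next
      case False
      have "(\<Sum>j<length t - 1. of_bool (merge j t \<in> S1)) = (\<Sum>j<length t - 1. (0::int))"
        by (rule sum.cong) (use m1 False in auto)
      then show ?thesis using False by simp
    qed
    have t0: "L \<Longrightarrow> 1 \<le> t!0" "L \<Longrightarrow> 1 \<le> t!1" "L \<Longrightarrow> 1 \<le> t!(k-1)"
      using pt assms unfolding L_def by auto
    note U = tsh_generic[OF f1 p1] tsh_generic[OF f2 p2] hadd_def hscale_def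
        hs1 hs2 hs3 hs4 hs5 if_P[OF True] sum1 sum2 b1 b2
    show ?thesis
    proof (cases L)
      case True
      then have lk: "length t = k" "sum_list t = n" unfolding L_def by auto
      have a: "1 \<le> t!0" "1 \<le> t!1" "1 \<le> t!(k-1)" using t0 True by auto
      have a': "Suc 0 \<le> t!0" "Suc 0 \<le> t!(Suc 0)" "Suc 0 \<le> t!(k - Suc 0)" using a by simp_all
      show ?thesis unfolding U using True lk a pt assms by (simp add: of_bool_def) (insert a', arith)
    next
      case False
      then have "\<not> (length t = k \<and> sum_list t = n)" unfolding L_def by auto
      then show ?thesis unfolding U using False by auto
    qed
  qed
  show ?thesis using main unfolding S1_def S2_def by blast
qed

end
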